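(* Let $\Omega\subset\mathbb{S}^m$ be a domain and $\rho\in C^1(\Omega)$. If the associated map $\phi^{\rho}:\Omega\to\mathbb{H}^{m+1}$ is proper, then for every $t\in\mathbb{R}$ the map $\phi_t:=\phi^{\rho+t}:\Omega\to\mathbb{H}^{m+1}$ (associated to $\rho+t$, i.e. to the dilated metric $e^{2t}e^{2\rho}g_0$) is also proper.
   Context: $\mathbb{S}^m\subset\mathbb{R}^{m+1}$ is the unit sphere with round metric $g_0$; $\nabla$ and $|\cdot|$ denote gradient and norm with respect to $g_0$. Let $\mathbb{L}^{m+2}$ be $\mathbb{R}^{m+2}$ with $\langle\!\langle x,y\rangle\!\rangle=-x_0y_0+\sum_{i=1}^{m+1}x_iy_i$, and $\mathbb{H}^{m+1}=\{x:\langle\!\langle x,x\rangle\!\rangle=-1,\ x_0>0\}$. For $\rho\in C^1(\Omega)$ the associated map $\phi^\rho:\Omega\to\mathbb{H}^{m+1}$ is $$\phi^\rho(x)=\frac{e^{\rho(x)}}{2}\Big(1+e^{-2\rho(x)}\big(1+|\nabla\rho(x)|^2\big)\Big)(1,x)+e^{-\rho(x)}\big(0,-x+\nabla\rho(x)\big).$$ (Equivalently $\phi^{\rho+t}=\cosh(t)\phi^\rho-\sinh(t)\eta$ with $\eta=\phi^\rho-e^{\rho}(1,x)$; this family is the parallel flow.) Proper means preimages of compact sets are compact. *)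

theory Defs
  imports "HOL-Analysis.Analysis"
begin

text \<open>The unit sphere S^m is sphere 0 1 in a Euclidean space 'a with DIM('a) = m+1.
  Minkowski space L^{m+2} is modelled as real \<times> 'a, with x = (x0, xbar).\<close>

definition lorentz :: "real \<times> 'a::euclidean_space \<Rightarrow> real \<times> 'a \<Rightarrow> real" where
  "lorentz x y = - fst x * fst y + snd x \<bullet> snd y"

definition hyperbolic :: "(real \<times> 'a::euclidean_space) set" where
  "hyperbolic = {x. lorentz x x = -1 \<and> fst x > 0}"

text \<open>Spherical (round-metric) gradient: the tangent vector v at x (v \<bullet> x = 0) representing
  the differential of rho at x along Omega.\<close>

definition is_sgrad :: "'a::euclidean_space set \<Rightarrow> ('a \<Rightarrow> real) \<Rightarrow> 'a \<Rightarrow> 'a \<Rightarrow> bool" where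
  "is_sgrad \<Omega> \<rho> x v \<longleftrightarrow> v \<bullet> x = 0 \<and> (\<rho> has_derivative (\<lambda>h. v \<bullet> h)) (at x within \<Omega>)"

definition sgrad :: "'a::euclidean_space set \<Rightarrow> ('a \<Rightarrow> real) \<Rightarrow> 'a \<Rightarrow> 'a" where
  "sgrad \<Omega> \<rho> x = (SOME v. is_sgrad \<Omega> \<rho> x v)"

definition sphere_C1 :: "'a::euclidean_space set \<Rightarrow> ('a \<Rightarrow> real) \<Rightarrow> bool" where
  "sphere_C1 \<Omega> \<rho> \<longleftrightarrow> (\<forall>x\<in>\<Omega>. \<exists>v. is_sgrad \<Omega> \<rho> x v) \<and> continuous_on \<Omega> (sgrad \<Omega> \<rho>)"

definition sphere_domain :: "'a::euclidean_space set \<Rightarrow> bool" where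
  "sphere_domain \<Omega> \<longleftrightarrow> \<Omega> \<subseteq> sphere 0 1 \<and> openin (top_of_set (sphere 0 1)) \<Omega> \<and> connected \<Omega> \<and> \<Omega> \<noteq> {}"

definition assoc_map :: "'a::euclidean_space set \<Rightarrow> ('a \<Rightarrow> real) \<Rightarrow> 'a \<Rightarrow> real \<times> 'a" where
  "assoc_map \<Omega> \<rho> x =
     (let g = sgrad \<Omega> \<rho> x;
          c = exp (\<rho> x) / 2 * (1 + exp (-2 * \<rho> x) * (1 + (norm g)\<^sup>2))
      in (c, c *\<^sub>R x + exp (- \<rho> x) *\<^sub>R (g - x)))"

definition proper_into_hyp :: "'a::euclidean_space set \<Rightarrow> ('a \<Rightarrow> real \<times> 'a) \<Rightarrow> bool" where
  "proper_into_hyp \<Omega> f \<longleftrightarrow>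
     (\<forall>K. K \<subseteq> hyperbolic \<and> compact K \<longrightarrow> compact {x \<in> \<Omega>. f x \<in> K})"

end

theory Submission
  imports Defs
begin

lemma sgrad_shift: "is_sgrad \<Omega> (\<lambda>x. \<rho> x + t) x v \<longleftrightarrow> is_sgrad \<Omega> \<rho> x v"
proof -
  have "(\<rho> has_derivative (\<lambda>h. v \<bullet> h)) (at x within \<Omega>)"
    if "((\<lambda>x. \<rho> x + t) has_derivative (\<lambda>h. v \<bullet> h)) (at x within \<Omega>)"
    using has_derivative_add_const[OF that, of "-t"] by simp
  then show ?thesis unfolding is_sgrad_def using has_derivative_add_const by blast
qed

lemma sgrad_shift_eq: "sgrad \<Omega> (\<lambda>x. \<rho> x + t) = sgrad \<Omega> \<rho>"
  unfolding sgrad_def[abs_def] sgrad_shift by simp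

lemma in_hyp:
  fixes x g :: "'a::euclidean_space" and r :: real
  assumes "norm x = 1" "g \<bullet> x = 0"
  defines "c \<equiv> exp r / 2 * (1 + exp (-2 * r) * (1 + (norm g)\<^sup>2))"
  shows "(c, c *\<^sub>R x + exp (- r) *\<^sub>R (g - x)) \<in> hyperbolic"
proof -
  define a where "a = exp r"
  define b where "b = exp (-r)"
  have ab: "a * b = 1" unfolding a_def b_def by (simp add: exp_minus)
  have e2: "exp (-2*r) = b^2" unfolding b_def by (simp add: power2_eq_square flip: exp_add)
  have xx: "x \<bullet> x = 1" using assms(1) by (simp add: dot_square_norm)
  have gg: "g \<bullet> g = (norm g)^2" by (simp add: dot_square_norm)
  have xg: "x \<bullet> g = 0" using assms(2) by (simp add: inner_commute)
  have c: "c = (a + b * (1 + (norm g)^2)) / 2"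
    unfolding c_def e2 a_def[symmetric] using ab by (simp add: field_simps power2_eq_square; algebra)
  have "lorentz (c, c *\<^sub>R x + b *\<^sub>R (g - x)) (c, c *\<^sub>R x + b *\<^sub>R (g - x))
      = - c*c + c*c + 2*c*b*(g \<bullet> x - 1) + b*b*((norm g)^2 - 2 * (g \<bullet> x) + 1)"
    unfolding lorentz_def
    by (simp add: inner_add_left inner_add_right inner_diff_left inner_diff_right xx gg xg
        assms(2) algebra_simps)
  also have "\<dots> = -1" using ab unfolding c assms(2)
    by (simp add: field_simps power2_eq_square; algebra)
  finally have "lorentz (c, c *\<^sub>R x + b *\<^sub>R (g - x)) (c, c *\<^sub>R x + b *\<^sub>R (g - x)) = -1" .
  moreover have "c > 0" unfolding c_def by (simp add: add_pos_nonneg)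
  ultimately show ?thesis unfolding hyperbolic_def b_def by simp
qed

lemma fst_bound:
  fixes r t n :: real
  assumes "n \<ge> 0"
  shows "exp r / 2 * (1 + exp (-2 * r) * (1 + n))
     \<le> exp \<bar>t\<bar> * (exp (r + t) / 2 * (1 + exp (-2 * (r + t)) * (1 + n)))"
proof -
  define P where "P = exp r"
  define Q where "Q = exp (-r) * (1+n)"
  have Q0: "Q \<ge> 0" "P \<ge> 0" using assms unfolding Q_def P_def by auto
  have l: "exp r / 2 * (1 + exp (-2 * r) * (1 + n)) = (P + Q)/2"
    unfolding P_def Q_def by (simp add: field_simps flip: exp_add)
  have rr: "exp (r + t) / 2 * (1 + exp (-2 * (r + t)) * (1 + n)) = (P * exp t + Q * exp (-t))/2"
    unfolding P_def Q_def by (simp add: field_simps flip: exp_add)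
  have "1 \<le> exp \<bar>t\<bar> * exp t" "1 \<le> exp \<bar>t\<bar> * exp (-t)"
    by (simp_all flip: exp_add)
  then have "P \<le> exp \<bar>t\<bar> * (P * exp t)" "Q \<le> exp \<bar>t\<bar> * (Q * exp (-t))"
    using Q0 mult_left_mono[of 1 _ P] mult_left_mono[of 1 _ Q]
    by (simp_all add: mult.assoc mult.left_commute)
  then show ?thesis unfolding l rr by (simp add: field_simps)
qed

lemma compact_hyp_cap: "compact {y::real \<times> 'a::euclidean_space. y \<in> hyperbolic \<and> fst y \<le> R}"
proof -
  have eq: "{y::real \<times> 'a. y \<in> hyperbolic \<and> fst y \<le> R}
      = {y. - fst y * fst y + snd y \<bullet> snd y = -1} \<inter> {y. fst y \<ge> 0} \<inter> {y. fst y \<le> R}"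
  proof (rule set_eqI)
    fix y :: "real \<times> 'a"
    have "b \<bullet> b \<ge> 0" for b :: 'a by simp
    then have "- (fst y * fst y) + snd y \<bullet> snd y = -1 \<Longrightarrow> fst y * fst y \<ge> 1"
      by (smt (verit))
    then have "- (fst y * fst y) + snd y \<bullet> snd y = -1 \<Longrightarrow> fst y \<ge> 0 \<Longrightarrow> fst y > 0"
      by (cases "fst y = 0") auto
    then show "y \<in> {y. y \<in> hyperbolic \<and> fst y \<le> R} \<longleftrightarrow> y \<in> {y. - fst y * fst y + snd y \<bullet> snd y = -1} \<inter> {y. fst y \<ge> 0} \<inter> {y. fst y \<le> R}"
      by (auto simp: hyperbolic_def lorentz_def)
  qed
  have cl: "closed {y::real \<times> 'a. y \<in> hyperbolic \<and> fst y \<le> R}"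
    unfolding eq
    by (intro closed_Int closed_Collect_eq closed_Collect_le continuous_intros)
  have "bounded {y::real \<times> 'a. y \<in> hyperbolic \<and> fst y \<le> R}"
    unfolding bounded_iff
  proof (intro exI[of _ "2 * \<bar>R\<bar>"] ballI)
    fix y :: "real \<times> 'a" assume y: "y \<in> {y. y \<in> hyperbolic \<and> fst y \<le> R}"
    obtain a b where ab: "y = (a, b)" by (cases y)
    have h: "- (a*a) + b \<bullet> b = -1" "a > 0" "a \<le> R" using y ab by (auto simp: hyperbolic_def lorentz_def)
    have "(norm b)^2 = b \<bullet> b" by (simp add: dot_square_norm)
    then have "(norm b)^2 \<le> a^2" using h by (simp add: power2_eq_square)
    then have "norm b \<le> a" using h(2) power2_le_imp_le[of "norm b" a] by simp
    then show "norm y \<le> 2 * \<bar>R\<bar>" using norm_Pair_le[of a b] h ab by auto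
  qed
  then show ?thesis using cl by (simp add: compact_eq_bounded_closed)
qed

lemma assoc_cont:
  assumes "continuous_on \<Omega> \<rho>" "continuous_on \<Omega> (sgrad \<Omega> \<rho>)"
  shows "continuous_on \<Omega> (assoc_map \<Omega> \<rho>)"
  unfolding assoc_map_def[abs_def] Let_def
  by (intro continuous_intros assms) simp_all

theorem mainTheorem4:
  fixes \<Omega> :: "'a::euclidean_space set" and \<rho> :: "'a \<Rightarrow> real"
  assumes "DIM('a) \<ge> 2"
    and "sphere_domain \<Omega>"
    and "sphere_C1 \<Omega> \<rho>"
    and "proper_into_hyp \<Omega> (assoc_map \<Omega> \<rho>)"
  shows "\<forall>t::real. proper_into_hyp \<Omega> (assoc_map \<Omega> (\<lambda>x. \<rho> x + t))"
proof (intro allI)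
  fix t :: real
  have sub: "\<Omega> \<subseteq> sphere 0 1" using assms(2) by (simp add: sphere_domain_def)
  have gr: "is_sgrad \<Omega> \<rho> x (sgrad \<Omega> \<rho> x)" if "x \<in> \<Omega>" for x
  proof -
    from assms(3) that obtain v where "is_sgrad \<Omega> \<rho> x v" unfolding sphere_C1_def by blast
    then show ?thesis unfolding sgrad_def by (rule someI)
  qed
  have contg: "continuous_on \<Omega> (sgrad \<Omega> \<rho>)" using assms(3) by (simp add: sphere_C1_def)
  have "continuous (at x within \<Omega>) \<rho>" if "x \<in> \<Omega>" for x
    using gr[OF that] unfolding is_sgrad_def by (rule has_derivative_continuous[OF conjunct2])
  then have contr: "continuous_on \<Omega> \<rho>"
    by (simp add: continuous_on_eq_continuous_within)
  have contr2: "continuous_on \<Omega> (\<lambda>x. \<rho> x + t)"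
    by (rule continuous_on_add[OF contr continuous_on_const])
  have contt: "continuous_on \<Omega> (assoc_map \<Omega> (\<lambda>x. \<rho> x + t))"
    by (rule assoc_cont[OF contr2]) (simp add: sgrad_shift_eq contg)
  show "proper_into_hyp \<Omega> (assoc_map \<Omega> (\<lambda>x. \<rho> x + t))"
    unfolding proper_into_hyp_def
  proof (intro allI impI)
    fix K :: "(real \<times> 'a) set" assume K: "K \<subseteq> hyperbolic \<and> compact K"
    then have "bounded K" by (simp add: compact_imp_bounded)
    then obtain B where B: "\<And>k. k \<in> K \<Longrightarrow> norm k \<le> B"
      unfolding bounded_iff by blast
    define R where "R = exp \<bar>t\<bar> * B"
    define C where "C = {x \<in> \<Omega>. assoc_map \<Omega> \<rho> x \<in> {y. y \<in> hyperbolic \<and> fst y \<le> R}}"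
    have Cc: "compact C"
    proof -
      have "{y. y \<in> hyperbolic \<and> fst y \<le> R} \<subseteq> hyperbolic" by blast
      then show ?thesis unfolding C_def
        using assms(4)[unfolded proper_into_hyp_def, rule_format, of "{y. y \<in> hyperbolic \<and> fst y \<le> R}"]
          compact_hyp_cap[of R] by simp
    qed
    define S where "S = {x \<in> \<Omega>. assoc_map \<Omega> (\<lambda>x. \<rho> x + t) x \<in> K}"
    have SC: "S \<subseteq> C"
    proof
      fix x assume "x \<in> S"
      then have x: "x \<in> \<Omega>" "assoc_map \<Omega> (\<lambda>x. \<rho> x + t) x \<in> K" by (auto simp: S_def)
      have nx: "norm x = 1" using sub x by auto
      have gx: "sgrad \<Omega> \<rho> x \<bullet> x = 0" using gr[OF x(1)] by (simp add: is_sgrad_def)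
      have hyp: "assoc_map \<Omega> \<rho> x \<in> hyperbolic"
        unfolding assoc_map_def Let_def using in_hyp[OF nx gx] by simp
      have f1: "fst (assoc_map \<Omega> (\<lambda>x. \<rho> x + t) x) \<le> B"
      proof -
        obtain a b where ab: "assoc_map \<Omega> (\<lambda>x. \<rho> x + t) x = (a, b)" by fastforce
        have "a \<le> norm (a, b)" unfolding norm_Pair real_norm_def using real_sqrt_sum_squares_ge1[of a "norm b"] by simp
        then show ?thesis using B[OF x(2)] ab by simp
      qed
      have f2: "fst (assoc_map \<Omega> \<rho> x) \<le> exp \<bar>t\<bar> * fst (assoc_map \<Omega> (\<lambda>x. \<rho> x + t) x)"
        unfolding assoc_map_def Let_def sgrad_shift_eq fst_conv
        by (rule fst_bound) simp
      have "exp \<bar>t\<bar> * fst (assoc_map \<Omega> (\<lambda>x. \<rho> x + t) x) \<le> R"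
        unfolding R_def using f1 by simp
      then have "fst (assoc_map \<Omega> \<rho> x) \<le> R" using f2 by linarith
      then show "x \<in> C" using hyp x by (simp add: C_def)
    qed
    have "closedin (top_of_set \<Omega>) {x \<in> \<Omega>. assoc_map \<Omega> (\<lambda>x. \<rho> x + t) x \<in> K}"
      using continuous_closedin_preimage[OF contt compact_imp_closed[of K]] K
      by (simp add: vimage_def Int_def conj_commute)
    then obtain T where T: "closed T" "S = \<Omega> \<inter> T" unfolding S_def closedin_closed by metis
    have "C \<subseteq> \<Omega>" unfolding C_def by auto
    then have "S = C \<inter> T" using T SC by auto
    then show "compact {x \<in> \<Omega>. assoc_map \<Omega> (\<lambda>x. \<rho> x + t) x \<in> K}"
      unfolding S_def[symmetric] \<open>S = C \<inter> T\<close> using compact_Int_closed[OF Cc T(1)] by simp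
  qed
qed

end
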